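(* Let $p,q\ge0$, $m=p+q$, and let $\boldsymbol x=(x_1,\dots,x_m)$, $\boldsymbol a=(a_1,\dots,a_m)$ be indeterminates. Then $$G^{p,q}(\boldsymbol x;\boldsymbol a)=(-1)^{\binom p2+\binom q2}\prod_{i=1}^m x_i^{p-1}(1-x_i^2)\cdot\det V^{p,q}(\boldsymbol x+\boldsymbol x^{-1};\boldsymbol a\boldsymbol x^{q-p})=(-1)^{\binom p2+\binom q2}\prod_{i=1}^m(1-x_i^2)\cdot\det U,$$ $$H^{p,q}(\boldsymbol x;\boldsymbol a)=(-1)^{\binom p2+\binom q2}\prod_{i=1}^m x_i^{p-1}(1-x_i)\cdot\det V^{p,q}(\boldsymbol x+\boldsymbol x^{-1};\boldsymbol a\boldsymbol x^{q-p})=(-1)^{\binom p2+\binom q2}\prod_{i=1}^m(1-x_i)\cdot\det U.$$ In particular $G^{p,q}(\boldsymbol x;\boldsymbol a)=\prod_{i=1}^m(1-x_i^2)\,F^{p,q}(\boldsymbol x;\boldsymbol a)$ and $H^{p,q}(\boldsymbol x;\boldsymbol a)=\prod_{i=1}^m(1-x_i)\,F^{p,q}(\boldsymbol x;\boldsymbol a)$. Here $\boldsymbol x+\boldsymbol x^{-1}=(x_1+x_1^{-1},\dots,x_m+x_m^{-1})$, $\boldsymbol a\boldsymbol x^{q-p}=(a_1x_1^{q-p},\dots,a_mx_m^{q-p})$, and $U$ is the $m\times m$ matrix whose $i$-th row is $$\big(x_i^{p-1},\,x_i^{p-2}(1+x_i^2),\,\dots,\,(1+x_i^2)^{p-1},\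 a_ix_i^{q-1},\,a_ix_i^{q-2}(1+x_i^2),\,\dots,\,a_i(1+x_i^2)^{q-1}\big).$$
   Context: Partitions: a partition $\lambda=(\lambda_1\ge\lambda_2\ge\cdots)$ of nonnegative integers with finitely many nonzero parts; $l(\lambda)$ is the number of nonzero parts, $|\lambda|=\sum_i\lambda_i$. In Frobenius notation $\lambda=(\alpha_1,\dots,\alpha_d\,|\,\beta_1,\dots,\beta_d)$ where $d=p(\lambda)=\#\{i:\lambda_i\ge i\}$, $\alpha_i=\lambda_i-i$, $\beta_i=\lambda'_i-i$ ($\lambda'$ the conjugate partition). For an integer $m\ge 0$: $\mathcal{P}_m$ is the set of partitions with $l(\lambda)\le m$ of the form $(\alpha_1,\dots,\alpha_d\,|\,\alpha_1+1,\dots,\alpha_d+1)$; $\mathcal Q_m$ those of the form $(\alpha_1+1,\dots,\alpha_d+1\,|\,\alpha_1,\dots,\alpha_d)$; $\mathcal R_m$ those of the form $(\alpha_1,\dots,\alpha_d\,|\,\alpha_1,\dots,\alpha_d)$ (the empty partition included in each). For nonnegative integers $p,q$, vectors $\boldsymbol{x}=(x_1,\dots,x_{p+q})$, $\boldsymbol{a}=(a_1,\dots,a_{p+q})$, and partitions $\lambda,\mu$ with $l(\lambda)\le p$, $l(\mu)\le q$, let $V^{p,q}_{\lambda,\mu}(\boldsymbol{x};\boldsymbol{a})$ be the $(p+q)\times(p+q)$ matrix whose $i$-th row is $$(x_i^{\lambda_p},x_i^{\lambda_{p-1}+1},\dots,x_i^{\lambda_1+p-1},\ a_ix_i^{\mu_q},a_ix_i^{\mu_{q-1}+1},\dots,a_ix_i^{\mu_1+q-1}),$$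 and $V^{p,q}(\boldsymbol x;\boldsymbol a)=V^{p,q}_{\emptyset,\emptyset}(\boldsymbol x;\boldsymbol a)$ (rows $(1,x_i,\dots,x_i^{p-1},a_i,a_ix_i,\dots,a_ix_i^{q-1})$). Define $$F^{p,q}(\boldsymbol{x};\boldsymbol{a})=\sum_{\lambda\in\mathcal{P}_p,\ \mu\in\mathcal{P}_q}(-1)^{(|\lambda|+|\mu|)/2}\det V^{p,q}_{\lambda,\mu}(\boldsymbol{x};\boldsymbol{a}),\qquad G^{p,q}(\boldsymbol{x};\boldsymbol{a})=\sum_{\lambda\in\mathcal{Q}_p,\ \mu\in\mathcal{Q}_q}(-1)^{(|\lambda|+|\mu|)/2}\det V^{p,q}_{\lambda,\mu}(\boldsymbol{x};\boldsymbol{a}),$$ $$H^{p,q}(\boldsymbol{x};\boldsymbol{a})=\sum_{\lambda\in\mathcal{R}_p,\ \mu\in\mathcal{R}_q}(-1)^{(|\lambda|+p(\lambda)+|\mu|+p(\mu))/2}\det V^{p,q}_{\lambda,\mu}(\boldsymbol{x};\boldsymbol{a}).$$ *)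

theory Defs
  imports Main "Jordan_Normal_Form.Determinant"
begin

text \<open>A partition with at most p nonzero parts is encoded as a nonincreasing list of
  length p (trailing zeros allowed).  Parts are indexed from 1.\<close>

definition parts :: "nat \<Rightarrow> nat list set" where
  "parts p = {lam. length lam = p \<and> sorted_wrt (\<ge>) lam}"

definition pt :: "nat list \<Rightarrow> nat \<Rightarrow> nat" where
  "pt lam i = (if 1 \<le> i \<and> i \<le> length lam then lam ! (i - 1) else 0)"

definition conj_pt :: "nat list \<Rightarrow> nat \<Rightarrow> nat" where
  "conj_pt lam j = card {i \<in> {1..length lam}. pt lam i \<ge> j}"

definition frob_rank :: "nat list \<Rightarrow> nat" where
  "frob_rank lam = card {i \<in> {1..length lam}. pt lam i \<ge> i}"

definition frob_alpha :: "nat list \<Rightarrow> nat \<Rightarrow> int" where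
  "frob_alpha lam i = int (pt lam i) - int i"

definition frob_beta :: "nat list \<Rightarrow> nat \<Rightarrow> int" where
  "frob_beta lam i = int (conj_pt lam i) - int i"

definition psize :: "nat list \<Rightarrow> nat" where
  "psize lam = sum_list lam"

definition PP :: "nat \<Rightarrow> nat list set" where
  "PP p = {lam \<in> parts p. \<forall>i\<in>{1..frob_rank lam}. frob_beta lam i = frob_alpha lam i + 1}"

definition QQ :: "nat \<Rightarrow> nat list set" where
  "QQ p = {lam \<in> parts p. \<forall>i\<in>{1..frob_rank lam}. frob_alpha lam i = frob_beta lam i + 1}"

definition RR :: "nat \<Rightarrow> nat list set" where
  "RR p = {lam \<in> parts p. \<forall>i\<in>{1..frob_rank lam}. frob_alpha lam i = frob_beta lam i}"

text \<open>The matrix V^{p,q}_{lam,mu}(x;a); rows/columns indexed from 0.\<close>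
definition Vmat :: "nat \<Rightarrow> nat \<Rightarrow> nat list \<Rightarrow> nat list \<Rightarrow> (nat \<Rightarrow> 'a::comm_ring_1) \<Rightarrow> (nat \<Rightarrow> 'a)
    \<Rightarrow> 'a mat" where
  "Vmat p q lam mu x a = mat (p + q) (p + q) (\<lambda>(i, j).
     if j < p then x i ^ (pt lam (p - j) + j)
     else a i * x i ^ (pt mu (q - (j - p)) + (j - p)))"

definition Fpq :: "nat \<Rightarrow> nat \<Rightarrow> (nat \<Rightarrow> 'a::comm_ring_1) \<Rightarrow> (nat \<Rightarrow> 'a) \<Rightarrow> 'a" where
  "Fpq p q x a = (\<Sum>(lam, mu) \<in> PP p \<times> PP q.
     (-1) ^ ((psize lam + psize mu) div 2) * det (Vmat p q lam mu x a))"

definition Gpq :: "nat \<Rightarrow> nat \<Rightarrow> (nat \<Rightarrow> 'a::comm_ring_1) \<Rightarrow> (nat \<Rightarrow> 'a) \<Rightarrow> 'a" where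
  "Gpq p q x a = (\<Sum>(lam, mu) \<in> QQ p \<times> QQ q.
     (-1) ^ ((psize lam + psize mu) div 2) * det (Vmat p q lam mu x a))"

definition Hpq :: "nat \<Rightarrow> nat \<Rightarrow> (nat \<Rightarrow> 'a::comm_ring_1) \<Rightarrow> (nat \<Rightarrow> 'a) \<Rightarrow> 'a" where
  "Hpq p q x a = (\<Sum>(lam, mu) \<in> RR p \<times> RR q.
     (-1) ^ ((psize lam + frob_rank lam + psize mu + frob_rank mu) div 2)
       * det (Vmat p q lam mu x a))"

definition Umat :: "nat \<Rightarrow> nat \<Rightarrow> (nat \<Rightarrow> 'a::comm_ring_1) \<Rightarrow> (nat \<Rightarrow> 'a) \<Rightarrow> 'a mat" where
  "Umat p q x a = mat (p + q) (p + q) (\<lambda>(i, j).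
     if j < p then x i ^ (p - 1 - j) * (1 + x i ^ 2) ^ j
     else a i * x i ^ (q - 1 - (j - p)) * (1 + x i ^ 2) ^ (j - p))"

end

theory Submission
  imports Defs
begin


lemma det_mat_col:
  fixes A :: "nat \<Rightarrow> nat \<Rightarrow> 'a::comm_ring_1"
  shows "det (mat n n (\<lambda>(i,j). A i j)) = (\<Sum>p | p permutes {0..<n}. signof p * (\<Prod>j<n. A (p j) j))"
proof -
  have car: "mat n n (\<lambda>(i,j). A i j) \<in> carrier_mat n n" by auto
  show ?thesis unfolding det_col[OF car]
  proof (rule sum.cong[OF refl])
    fix p assume "p \<in> {p. p permutes {0..<n}}"
    hence p: "p permutes {0..<n}" by simp
    have "\<And>j. j < n \<Longrightarrow> p j < n" using permutes_in_image[OF p] by simp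
    thus "signof p * (\<Prod>j<n. mat n n (\<lambda>(i,j). A i j) $$ (p j, j)) = signof p * (\<Prod>j<n. A (p j) j)"
      by (auto intro!: prod.cong)
  qed
qed

lemma det_col_lin:
  fixes A B C :: "nat \<Rightarrow> nat \<Rightarrow> 'a::comm_ring_1"
  assumes k: "k < n"
    and o1: "\<And>i j. i < n \<Longrightarrow> j < n \<Longrightarrow> j \<noteq> k \<Longrightarrow> B i j = A i j"
    and o2: "\<And>i j. i < n \<Longrightarrow> j < n \<Longrightarrow> j \<noteq> k \<Longrightarrow> C i j = A i j"
    and kk: "\<And>i. i < n \<Longrightarrow> A i k = B i k + c * C i k"
  shows "det (mat n n (\<lambda>(i,j). A i j)) = det (mat n n (\<lambda>(i,j). B i j)) + c * det (mat n n (\<lambda>(i,j). C i j))"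
proof -
  have eq: "signof p * (\<Prod>j<n. A (p j) j) = signof p * (\<Prod>j<n. B (p j) j) + c * (signof p * (\<Prod>j<n. C (p j) j))"
    if p: "p permutes {0..<n}" for p
  proof -
    have pj: "\<And>j. j < n \<Longrightarrow> p j < n" using permutes_in_image[OF p] by simp
    have r: "(\<Prod>j<n. f (p j) j) = f (p k) k * (\<Prod>j\<in>{..<n}-{k}. f (p j) j)" for f :: "nat \<Rightarrow> nat \<Rightarrow> 'a"
      using k by (simp add: prod.remove)
    have "(\<Prod>j\<in>{..<n}-{k}. B (p j) j) = (\<Prod>j\<in>{..<n}-{k}. A (p j) j)" by (rule prod.cong) (auto simp: o1 pj)
    moreover have "(\<Prod>j\<in>{..<n}-{k}. C (p j) j) = (\<Prod>j\<in>{..<n}-{k}. A (p j) j)" by (rule prod.cong) (auto simp: o2 pj)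
    ultimately show ?thesis using kk[OF pj[OF k]] r[of A] r[of B] r[of C] by (simp add: algebra_simps)
  qed
  show ?thesis unfolding det_mat_col
    by (simp add: eq sum.distrib sum_distrib_left)
qed

lemma det_col_swap:
  fixes A :: "nat \<Rightarrow> nat \<Rightarrow> 'a::comm_ring_1"
  assumes k: "k < n" and l: "l < n" and kl: "k \<noteq> l"
  shows "det (mat n n (\<lambda>(i,j). A i (if j = k then l else if j = l then k else j))) = - det (mat n n (\<lambda>(i,j). A i j))"
proof -
  have car: "mat n n (\<lambda>(i,j). A i j) \<in> carrier_mat n n" by auto
  have "swapcols k l (mat n n (\<lambda>(i,j). A i j)) = mat n n (\<lambda>(i,j). A i (if j = k then l else if j = l then k else j))"
    using k l by (auto simp: mat_swapcols_def intro!: eq_matI)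
  thus ?thesis using det_swapcols[OF k l kl car] by simp
qed

definition DL :: "nat \<Rightarrow> (nat \<Rightarrow> 'a::comm_ring_1) list \<Rightarrow> 'a" where
  "DL n cs = det (mat n n (\<lambda>(i,j). (cs ! j) i))"

lemma DL_lin:
  assumes "length pre + Suc (length post) = n"
  shows "DL n (pre @ [(\<lambda>i. u i + c * v i)] @ post) = DL n (pre @ [u] @ post) + c * DL n (pre @ [v] @ post)"
  unfolding DL_def
  by (rule det_col_lin[where k = "length pre"], insert assms, auto simp: nth_append)

lemma DL_swap:
  assumes "length pre + Suc (Suc (length post)) = n"
  shows "DL n (pre @ [u, v] @ post) = - DL n (pre @ [v, u] @ post)"
proof -
  let ?k = "length pre" 
  have "DL n (pre @ [u, v] @ post) = det (mat n n (\<lambda>(i,j). ((pre @ [v, u] @ post) ! 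
     (if j = ?k then Suc ?k else if j = Suc ?k then ?k else j)) i))"
    unfolding DL_def
    by (rule arg_cong[of _ _ det], rule eq_matI, auto simp: nth_append)
  also have "\<dots> = - DL n (pre @ [v, u] @ post)" unfolding DL_def
    by (rule det_col_swap[of "length pre" n "Suc (length pre)" "\<lambda>i j. ((pre @ [v, u] @ post) ! j) i"], insert assms, auto)
  finally show ?thesis .
qed

lemma DL_move:
  assumes "length pre + Suc (length mid + length post) = n"
  shows "DL n (pre @ [v] @ mid @ post) = (-1) ^ length mid * DL n (pre @ mid @ [v] @ post)"
  using assms
proof (induction mid arbitrary: pre)
  case Nil thus ?case by simp
next
  case (Cons w mid)
  have "DL n (pre @ [v] @ (w # mid) @ post) = DL n (pre @ [v, w] @ (mid @ post))" by simp
  also have "\<dots> = - DL n (pre @ [w, v] @ (mid @ post))" by (rule DL_swap, insert Cons.prems, simp)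
  also have "pre @ [w, v] @ (mid @ post) = (pre @ [w]) @ [v] @ mid @ post" by simp
  also have "DL n \<dots> = (-1) ^ length mid * DL n ((pre @ [w]) @ mid @ [v] @ post)"
    by (rule Cons.IH, insert Cons.prems, simp)
  finally show ?case by simp
qed

lemma DL_rev:
  assumes "length pre + length C + length post = n"
  shows "DL n (pre @ rev C @ post) = (-1) ^ (length C choose 2) * DL n (pre @ C @ post)"
  using assms
proof (induction C arbitrary: post)
  case Nil thus ?case by (simp add: choose_two)
next
  case (Cons v C)
  have "DL n (pre @ rev (v # C) @ post) = DL n (pre @ rev C @ ([v] @ post))" by simp
  also have "\<dots> = (-1) ^ (length C choose 2) * DL n (pre @ C @ ([v] @ post))"
    by (rule Cons.IH, insert Cons.prems, simp)
  also have "DL n (pre @ C @ ([v] @ post)) = (-1) ^ length C * DL n (pre @ [v] @ C @ post)"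
    using DL_move[of pre C post n v] Cons.prems by (simp add: power_mult_distrib[symmetric])
  finally have "DL n (pre @ rev (v # C) @ post) = (-1) ^ (length C + (length C choose 2)) * DL n (pre @ (v # C) @ post)"
    by (simp add: power_add)
  moreover have "Suc (length C) choose 2 = length C + (length C choose 2)"
    by (simp add: numeral_2_eq_2)
  ultimately show ?case by simp
qed


definition XX :: "nat \<Rightarrow> nat \<Rightarrow> nat list set" where
  "XX d p = {lam \<in> parts p. \<forall>i\<in>{1..frob_rank lam}. frob_alpha lam i = frob_beta lam i + int d - 1}"

lemma QQ_XX: "QQ p = XX 2 p" unfolding QQ_def XX_def by auto
lemma RR_XX: "RR p = XX 1 p" unfolding RR_def XX_def by auto
lemma PP_XX: "PP p = XX 0 p" unfolding PP_def XX_def by auto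

lemma parts_length: "l \<in> parts p \<Longrightarrow> length l = p" unfolding parts_def by auto

lemma pt_mono:
  assumes "l \<in> parts p" "1 \<le> j" "j \<le> i"
  shows "pt l i \<le> pt l j"
proof (cases "i \<le> p")
  case True
  have s: "sorted_wrt (\<ge>) l" and len: "length l = p" using assms(1) unfolding parts_def by auto
  show ?thesis
  proof (cases "j = i")
    case False
    hence "j - 1 < i - 1" using assms by auto
    thus ?thesis using s True len assms unfolding pt_def sorted_wrt_iff_nth_less by auto
  qed simp
next
  case False
  thus ?thesis using assms unfolding parts_def pt_def by auto
qed

lemma pt_le_first:
  assumes "l \<in> parts p" "x \<in> set l"
  shows "x \<le> pt l 1"
proof -
  obtain k where k: "k < length l" "l ! k = x" using assms(2) by (auto simp: in_set_conv_nth)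
  have "pt l (Suc k) = x" using k unfolding pt_def by auto
  thus ?thesis using pt_mono[OF assms(1), of 1 "Suc k"] by auto
qed

lemma rank_set:
  assumes "l \<in> parts p"
  shows "{i \<in> {1..length l}. pt l i \<ge> i} = {1..frob_rank l}"
proof -
  define S where "S = {i \<in> {1..length l}. pt l i \<ge> i}"
  have dc: "j \<in> S" if "i \<in> S" "1 \<le> j" "j \<le> i" for i j
  proof -
    have "pt l i \<le> pt l j" by (rule pt_mono[OF assms that(2,3)])
    moreover have "i \<le> pt l i" "i \<le> length l" using that(1) unfolding S_def by auto
    ultimately show ?thesis using that(2,3) unfolding S_def by simp
  qed
  have fin: "finite S" unfolding S_def by simp
  have rk: "frob_rank l = card S" unfolding frob_rank_def S_def by simp
  show ?thesis
  proof (cases "S = {}")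
    case True thus ?thesis unfolding rk S_def[symmetric] by simp
  next
    case False
    define M where "M = Max S"
    have M: "M \<in> S" unfolding M_def using Max_in[OF fin False] .
    have sub1: "S \<subseteq> {1..M}"
    proof
      fix i assume i: "i \<in> S"
      have "i \<le> M" unfolding M_def by (rule Max_ge[OF fin i])
      moreover have "1 \<le> i" using i unfolding S_def by simp
      ultimately show "i \<in> {1..M}" by simp
    qed
    have sub2: "{1..M} \<subseteq> S"
    proof
      fix j assume "j \<in> {1..M}"
      thus "j \<in> S" using dc[OF M] by simp
    qed
    have E: "S = {1..M}" using sub1 sub2 by (rule subset_antisym)
    hence "card S = M" by simp
    thus ?thesis unfolding rk S_def[symmetric] using E by simp
  qed
qed

lemma rank_pt:
  assumes "l \<in> parts p" "1 \<le> i" "i \<le> frob_rank l"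
  shows "i \<le> pt l i" "i \<le> p"
proof -
  have "i \<in> {1..frob_rank l}" using assms by simp
  hence "i \<in> {i \<in> {1..length l}. pt l i \<ge> i}" by (simp only: rank_set[OF assms(1)])
  thus "i \<le> pt l i" "i \<le> p" using parts_length[OF assms(1)] by auto
qed

lemma conj_pt_le: "conj_pt l j \<le> length l"
proof -
  have "conj_pt l j \<le> card {1..length l}" unfolding conj_pt_def by (rule card_mono) auto
  thus ?thesis by simp
qed

lemma pt_beyond: "length l < i \<Longrightarrow> pt l i = 0"
  unfolding pt_def by simp

lemma pt_app0: "pt (l @ [0]) i = pt l i"
proof (cases "i = Suc (length l)")
  case True thus ?thesis unfolding pt_def by simp
next
  case False
  show ?thesis
  proof (cases "1 \<le> i \<and> i \<le> length l")
    case True thus ?thesis unfolding pt_def by (auto simp: nth_append)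
  next
    case F2: False
    hence "\<not> (1 \<le> i \<and> i \<le> length (l @ [0]))" using False by auto
    thus ?thesis using F2 unfolding pt_def by presburger
  qed
qed

lemma set_Suc_drop:
  assumes "\<not> P (Suc n)"
  shows "{i \<in> {1..Suc n}. P i} = {i \<in> {1..n}. P i}"
proof -
  have "{1..Suc n} = insert (Suc n) {1..n}" by auto
  thus ?thesis using assms by auto
qed

lemma conj_pt_app0: "j \<ge> 1 \<Longrightarrow> conj_pt (l @ [0]) j = conj_pt l j"
  unfolding conj_pt_def pt_app0 length_append_singleton
  by (subst set_Suc_drop) (auto simp: pt_beyond)

lemma frob_rank_app0: "frob_rank (l @ [0]) = frob_rank l"
  unfolding frob_rank_def pt_app0 length_append_singleton
  by (subst set_Suc_drop) (auto simp: pt_beyond)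

lemma parts_app0: "l @ [0] \<in> parts (Suc p) \<longleftrightarrow> l \<in> parts p"
  unfolding parts_def by (auto simp: sorted_wrt_append)

lemma XX_app0: "l @ [0] \<in> XX d (Suc p) \<longleftrightarrow> l \<in> XX d p"
  unfolding XX_def frob_alpha_def frob_beta_def
  by (simp add: parts_app0 frob_rank_app0 pt_app0 conj_pt_app0)

lemma psize_app0: "psize (l @ [0]) = psize l" unfolding psize_def by simp

lemma pt_cons1: "pt (h # map Suc l) 1 = h" unfolding pt_def by simp
lemma pt_cons1'[simp]: "pt (h # map Suc l) (Suc 0) = h" unfolding pt_def by simp
lemma pt_consS: "1 \<le> i \<Longrightarrow> i \<le> length l \<Longrightarrow> pt (h # map Suc l) (Suc i) = Suc (pt l i)"
  unfolding pt_def by (auto simp: nth_Cons')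
lemma pt_consS': "length l < i \<Longrightarrow> pt (h # map Suc l) (Suc i) = 0"
  unfolding pt_def by auto

lemma frob_rank_cons:
  assumes h: "1 \<le> h"
  shows "frob_rank (h # map Suc l) = Suc (frob_rank l)"
proof -
  have "{i \<in> {1..length (h # map Suc l)}. pt (h # map Suc l) i \<ge> i}
     = insert 1 (Suc ` {i \<in> {1..length l}. pt l i \<ge> i})" (is "?A = ?B")
  proof
    show "?A \<subseteq> ?B"
    proof
      fix i assume i: "i \<in> ?A"
      show "i \<in> ?B"
      proof (cases "i = 1")
        case False
        then obtain i' where i': "i = Suc i'" "1 \<le> i'" using i by (cases i) auto
        thus ?thesis using i pt_consS[of i' l h] by auto
      qed simp
    qed
    show "?B \<subseteq> ?A" using h pt_consS[of _ l h] by (auto simp: pt_cons1)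
  qed
  moreover have "card ?B = Suc (card {i \<in> {1..length l}. pt l i \<ge> i})"
    by (subst card_insert_disjoint) (auto simp: card_image)
  ultimately show ?thesis unfolding frob_rank_def by simp
qed

lemma conj_pt_cons1:
  assumes h: "1 \<le> h"
  shows "conj_pt (h # map Suc l) 1 = Suc (length l)"
proof -
  have "{i \<in> {1..length (h # map Suc l)}. pt (h # map Suc l) i \<ge> 1} = {1..Suc (length l)}"
    using h by (auto simp: pt_def nth_Cons')
  thus ?thesis unfolding conj_pt_def by simp
qed

lemma conj_pt_consS:
  assumes h: "Suc j \<le> h" and j: "1 \<le> j"
  shows "conj_pt (h # map Suc l) (Suc j) = Suc (conj_pt l j)"
proof -
  have "{i \<in> {1..length (h # map Suc l)}. pt (h # map Suc l) i \<ge> Suc j}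
     = insert 1 (Suc ` {i \<in> {1..length l}. pt l i \<ge> j})" (is "?A = ?B")
  proof
    show "?A \<subseteq> ?B"
    proof
      fix i assume i: "i \<in> ?A"
      show "i \<in> ?B"
      proof (cases "i = 1")
        case False
        then obtain i' where i': "i = Suc i'" "1 \<le> i'" using i by (cases i) auto
        thus ?thesis using i pt_consS[of i' l h] by auto
      qed simp
    qed
    show "?B \<subseteq> ?A" using h pt_consS[of _ l h] by (auto simp: pt_cons1)
  qed
  moreover have "card ?B = Suc (card {i \<in> {1..length l}. pt l i \<ge> j})"
    by (subst card_insert_disjoint) (auto simp: card_image)
  ultimately show ?thesis unfolding conj_pt_def by simp
qed

lemma parts_cons:
  "h # map Suc l \<in> parts (Suc p) \<longleftrightarrow> l \<in> parts p \<and> (\<forall>x\<in>set l. Suc x \<le> h)"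
  unfolding parts_def by (auto simp: sorted_wrt_map)

lemma psize_cons: "psize (h # map Suc l) = h + psize l + length l"
  unfolding psize_def by (induction l) auto

lemma cons_XX:
  assumes l: "l \<in> parts p" and hl: "\<forall>x\<in>set l. Suc x \<le> h" and h: "1 \<le> h"
  shows "h # map Suc l \<in> XX d (Suc p) \<longleftrightarrow> (h = p + d \<and> l \<in> XX d p)"
proof -
  let ?L = "h # map Suc l"
  have len: "length l = p" using parts_length[OF l] .
  have rk: "frob_rank ?L = Suc (frob_rank l)" using frob_rank_cons[OF h] .
  have hi: "Suc i \<le> h" if "1 \<le> i" "i \<le> frob_rank l" for i
  proof -
    have "i \<le> pt l i" "i \<le> p" using rank_pt[OF l that] by auto
    moreover have "pt l i \<in> set l" using that \<open>i \<le> p\<close> len unfolding pt_def by auto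
    ultimately show ?thesis using hl by force
  qed
  have a1: "frob_alpha ?L 1 = int h - 1" unfolding frob_alpha_def pt_cons1 by simp
  have b1: "frob_beta ?L 1 = int p" unfolding frob_beta_def conj_pt_cons1[OF h] len by simp
  have aS: "frob_alpha ?L (Suc i) = frob_alpha l i" if "1 \<le> i" "i \<le> frob_rank l" for i
    using rank_pt[OF l that] len that unfolding frob_alpha_def by (simp add: pt_consS)
  have bS: "frob_beta ?L (Suc i) = frob_beta l i" if "1 \<le> i" "i \<le> frob_rank l" for i
    using conj_pt_consS[OF hi[OF that] that(1)] unfolding frob_beta_def by simp
  have "(\<forall>i\<in>{1..frob_rank ?L}. frob_alpha ?L i = frob_beta ?L i + int d - 1) \<longleftrightarrow>
        (frob_alpha ?L 1 = frob_beta ?L 1 + int d - 1) \<and>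
        (\<forall>i\<in>{1..frob_rank l}. frob_alpha ?L (Suc i) = frob_beta ?L (Suc i) + int d - 1)"
    unfolding rk
  proof
    assume A: "\<forall>i\<in>{1..Suc (frob_rank l)}. frob_alpha ?L i = frob_beta ?L i + int d - 1"
    thus "(frob_alpha ?L 1 = frob_beta ?L 1 + int d - 1) \<and>
        (\<forall>i\<in>{1..frob_rank l}. frob_alpha ?L (Suc i) = frob_beta ?L (Suc i) + int d - 1)" by auto
  next
    assume A: "(frob_alpha ?L 1 = frob_beta ?L 1 + int d - 1) \<and>
        (\<forall>i\<in>{1..frob_rank l}. frob_alpha ?L (Suc i) = frob_beta ?L (Suc i) + int d - 1)"
    show "\<forall>i\<in>{1..Suc (frob_rank l)}. frob_alpha ?L i = frob_beta ?L i + int d - 1"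
    proof
      fix i assume i: "i \<in> {1..Suc (frob_rank l)}"
      show "frob_alpha ?L i = frob_beta ?L i + int d - 1"
      proof (cases "i = 1")
        case True thus ?thesis using A by simp
      next
        case False
        then obtain i' where "i = Suc i'" "1 \<le> i'" "i' \<le> frob_rank l" using i by (cases i) auto
        thus ?thesis using A by auto
      qed
    qed
  qed
  also have "\<dots> \<longleftrightarrow> h = p + d \<and> (\<forall>i\<in>{1..frob_rank l}. frob_alpha l i = frob_beta l i + int d - 1)"
    using a1 b1 aS bS by auto
  finally show ?thesis
    unfolding XX_def using l hl by (auto simp: parts_cons)
qed

lemma XX_bound:
  assumes l: "l \<in> XX d p" and p: "1 \<le> p"
  shows "pt l 1 + 1 \<le> p + d"
proof -
  have lp: "l \<in> parts p" using l unfolding XX_def by auto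
  show ?thesis
  proof (cases "1 \<le> frob_rank l")
    case True
    hence "frob_alpha l 1 = frob_beta l 1 + int d - 1" using l unfolding XX_def by auto
    moreover have "conj_pt l 1 \<le> p" using conj_pt_le[of l 1] parts_length[OF lp] by simp
    ultimately show ?thesis unfolding frob_alpha_def frob_beta_def by simp
  next
    case False
    hence "frob_rank l = 0" by simp
    hence "\<not> (1 \<le> pt l 1)" using rank_set[OF lp] p parts_length[OF lp] by auto
    thus ?thesis using p by simp
  qed
qed

lemma XX_0: "XX d 0 = {[]}"
  unfolding XX_def parts_def frob_rank_def by auto

lemma XX_Suc:
  "XX d (Suc p) = (\<lambda>l. l @ [0]) ` XX d p \<union> (if 1 \<le> p + d then (\<lambda>l. (p + d) # map Suc l) ` XX d p else {})"
  (is "?A = ?B \<union> ?C")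
proof
  show "?B \<union> ?C \<subseteq> ?A"
  proof
    fix L assume "L \<in> ?B \<union> ?C"
    then consider (a) l where "l \<in> XX d p" "L = l @ [0]" | (b) l where "l \<in> XX d p" "L = (p + d) # map Suc l" "1 \<le> p + d"
      by (auto split: if_splits)
    thus "L \<in> ?A"
    proof cases
      case a thus ?thesis by (simp add: XX_app0)
    next
      case b
      have lp: "l \<in> parts p" using b(1) unfolding XX_def by auto
      have hl: "\<forall>x\<in>set l. Suc x \<le> p + d"
      proof
        fix x assume x: "x \<in> set l"
        hence "1 \<le> p" using parts_length[OF lp] by (cases p) auto
        thus "Suc x \<le> p + d" using XX_bound[OF b(1)] pt_le_first[OF lp x] by simp
      qed
      show ?thesis using cons_XX[OF lp hl b(3)] b by simp
    qed
  qed
  show "?A \<subseteq> ?B \<union> ?C"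
  proof
    fix L assume L: "L \<in> ?A"
    hence Lp: "L \<in> parts (Suc p)" unfolding XX_def by auto
    hence len: "length L = Suc p" by (rule parts_length)
    have sL: "sorted_wrt (\<ge>) L" using Lp unfolding parts_def by auto
    show "L \<in> ?B \<union> ?C"
    proof (cases "L ! p = 0")
      case True
      have "L = butlast L @ [last L]" using len by (metis append_butlast_last_id list.size(3) nat.distinct(1))
      moreover have "last L = 0" using True len last_conv_nth[of L] by (cases L) auto
      ultimately have E: "L = butlast L @ [0]" by simp
      hence "butlast L \<in> XX d p" using L XX_app0[of "butlast L" d p] by simp
      thus ?thesis using E by blast
    next
      case False
      obtain h T where LT: "L = h # T" using len by (cases L) auto
      have lenT: "length T = p" using len LT by simp
      have T1: "\<forall>x\<in>set T. 1 \<le> x"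
      proof
        fix x assume "x \<in> set T"
        then obtain k where k: "k < p" "T ! k = x" using lenT by (auto simp: in_set_conv_nth)
        have "L ! p \<le> L ! Suc k \<or> Suc k = p" using sL len k unfolding sorted_wrt_iff_nth_less
          by (metis Suc_lessI lessI)
        thus "1 \<le> x" using False k LT by auto
      qed
      define l where "l = map (\<lambda>v. v - 1) T"
      have Tl: "T = map Suc l" unfolding l_def using T1 by (induction T) auto
      have h1: "1 \<le> h"
      proof (cases p)
        case 0 thus ?thesis using False LT by simp
      next
        case (Suc p')
        have "T ! 0 \<le> h" using sL LT lenT Suc by auto
        moreover have "1 \<le> T ! 0" using T1 lenT Suc by auto
        ultimately show ?thesis by simp
      qed
      have "h # map Suc l \<in> parts (Suc p)" using Lp LT Tl by simp
      hence lp: "l \<in> parts p" and hl: "\<forall>x\<in>set l. Suc x \<le> h" by (auto simp: parts_cons)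
      have "h = p + d \<and> l \<in> XX d p" using cons_XX[OF lp hl h1] L LT Tl by simp
      thus ?thesis using LT Tl h1 by auto
    qed
  qed
qed

lemma XX_Suc_disj: "1 \<le> h \<Longrightarrow> (\<lambda>l. l @ [0]) ` XX d p \<inter> (\<lambda>l. h # map Suc l) ` XX d p = {}"
proof -
  assume h: "1 \<le> h"
  { fix l l' assume l: "l \<in> XX d p" and l': "l' \<in> XX d p" and E: "l @ [0] = h # map Suc l'"
    have "length l' = p" using l' unfolding XX_def parts_def by auto
    hence "last (h # map Suc l') \<noteq> 0" using h by (cases l' rule: rev_cases) auto
    with E have False by (metis last_snoc) }
  thus ?thesis by blast
qed

lemma XX_finite: "finite (XX d p)"
proof (induction p)
  case 0 thus ?case by (simp add: XX_0)
next
  case (Suc p) thus ?case by (simp add: XX_Suc)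
qed

definition wgt :: "nat \<Rightarrow> nat list \<Rightarrow> nat" where
  "wgt d l = psize l + (if d = 1 then frob_rank l else 0)"

lemma wgt_app0: "wgt d (l @ [0]) = wgt d l"
  unfolding wgt_def by (simp add: psize_app0 frob_rank_app0)

lemma wgt_cons:
  assumes "l \<in> XX d p" "d \<le> 2" "1 \<le> p + d"
  shows "wgt d ((p + d) # map Suc l) = wgt d l + 2 * (p + (if 1 \<le> d then 1 else 0))"
proof -
  have "length l = p" using assms(1) unfolding XX_def parts_def by auto
  moreover have "d = 0 \<or> d = 1 \<or> d = 2" using assms(2) by auto
  ultimately show ?thesis using assms(3) unfolding wgt_def psize_cons frob_rank_cons[OF assms(3)]
    by auto
qed

lemma wgt_even: "l \<in> XX d p \<Longrightarrow> d \<le> 2 \<Longrightarrow> even (wgt d l)"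
proof (induction p arbitrary: l)
  case 0 thus ?case by (simp add: XX_0 wgt_def psize_def frob_rank_def)
next
  case (Suc p)
  from Suc.prems(1) consider (a) l' where "l' \<in> XX d p" "l = l' @ [0]"
    | (b) l' where "l' \<in> XX d p" "l = (p + d) # map Suc l'" "1 \<le> p + d"
    unfolding XX_Suc by (auto split: if_splits)
  thus ?case
  proof cases
    case a thus ?thesis using Suc.IH Suc.prems by (simp add: wgt_app0)
  next
    case b thus ?thesis using Suc.IH[OF b(1)] Suc.prems wgt_cons[OF b(1) _ b(3)] by simp
  qed
qed


definition bcols :: "(nat \<Rightarrow> nat \<Rightarrow> 'a) \<Rightarrow> nat \<Rightarrow> nat list \<Rightarrow> (nat \<Rightarrow> 'a) list" where
  "bcols e p lam = map (\<lambda>j. e (pt lam (p - j) + j)) [0..<p]"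

definition cc :: "nat \<Rightarrow> 'a::comm_ring_1" where
  "cc d = (if d = 0 then 1 else -1)"

definition coef :: "nat \<Rightarrow> nat \<Rightarrow> nat \<Rightarrow> 'a::comm_ring_1" where
  "coef d p k = (if k < 2 * p - 2 + d - k then cc d else 0)"

definition Rcols :: "nat \<Rightarrow> (nat \<Rightarrow> nat \<Rightarrow> 'a::comm_ring_1) \<Rightarrow> nat \<Rightarrow> (nat \<Rightarrow> 'a) list" where
  "Rcols d e p = map (\<lambda>k. (\<lambda>i. e k i + coef d p k * e (2 * p - 2 + d - k) i)) [0..<p]"

definition eps :: "nat \<Rightarrow> nat list \<Rightarrow> 'a::comm_ring_1" where
  "eps d l = (-1) ^ (wgt d l div 2)"

lemma bcols_app0:
  assumes "length l = p"
  shows "bcols e (Suc p) (l @ [0]) = e 0 # bcols (\<lambda>k. e (Suc k)) p l"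
proof (rule nth_equalityI)
  show "length (bcols e (Suc p) (l @ [0])) = length (e 0 # bcols (\<lambda>k. e (Suc k)) p l)"
    unfolding bcols_def by simp
next
  fix j assume j: "j < length (bcols e (Suc p) (l @ [0]))"
  hence j: "j < Suc p" unfolding bcols_def by simp
  show "bcols e (Suc p) (l @ [0]) ! j = (e 0 # bcols (\<lambda>k. e (Suc k)) p l) ! j"
  proof (cases j)
    case 0
    thus ?thesis using assms unfolding bcols_def by (simp add: pt_app0 pt_beyond del: upt_Suc)
  next
    case (Suc j')
    hence "j' < p" using j by simp
    thus ?thesis using assms Suc unfolding bcols_def by (simp add: pt_app0 nth_Cons' del: upt_Suc)
  qed
qed

lemma bcols_cons:
  assumes "length l = p"
  shows "bcols e (Suc p) (h # map Suc l) = bcols (\<lambda>k. e (Suc k)) p l @ [e (h + p)]"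
proof (rule nth_equalityI)
  show "length (bcols e (Suc p) (h # map Suc l)) = length (bcols (\<lambda>k. e (Suc k)) p l @ [e (h + p)])"
    unfolding bcols_def by simp
next
  fix j assume j: "j < length (bcols e (Suc p) (h # map Suc l))"
  hence j: "j < Suc p" unfolding bcols_def by simp
  show "bcols e (Suc p) (h # map Suc l) ! j = (bcols (\<lambda>k. e (Suc k)) p l @ [e (h + p)]) ! j"
  proof (cases "j < p")
    case True
    have e: "Suc p - j = Suc (p - j)" using True by simp
    have "pt (h # map Suc l) (Suc (p - j)) = Suc (pt l (p - j))"
      by (rule pt_consS) (use True assms in auto)
    thus ?thesis using True assms unfolding bcols_def by (simp add: nth_append e del: upt_Suc)
  next
    case False
    hence "j = p" using j by simp
    thus ?thesis using assms unfolding bcols_def by (simp add: nth_append del: upt_Suc)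
  qed
qed

lemma Rcols_Suc:
  "Rcols d e (Suc p) = (\<lambda>i. e 0 i + coef d (Suc p) 0 * e (2 * p + d) i) # Rcols d (\<lambda>k. e (Suc k)) p"
proof (rule nth_equalityI)
  show "length (Rcols d e (Suc p)) = length ((\<lambda>i. e 0 i + coef d (Suc p) 0 * e (2 * p + d) i) # Rcols d (\<lambda>k. e (Suc k)) p)"
    unfolding Rcols_def by simp
next
  fix j assume j: "j < length (Rcols d e (Suc p))"
  hence j: "j < Suc p" unfolding Rcols_def by simp
  show "Rcols d e (Suc p) ! j = ((\<lambda>i. e 0 i + coef d (Suc p) 0 * e (2 * p + d) i) # Rcols d (\<lambda>k. e (Suc k)) p) ! j"
  proof (cases j)
    case 0 thus ?thesis unfolding Rcols_def by (simp del: upt_Suc)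
  next
    case (Suc j')
    hence j': "j' < p" using j by simp
    have a: "2 * Suc p - 2 + d - Suc j' = Suc (2 * p - 2 + d - j')" using j' by simp
    have b: "coef d (Suc p) (Suc j') = (coef d p j' :: 'a)" unfolding coef_def using j' by auto
    have a': "2 * p + d - Suc j' = Suc (2 * p + d - Suc (Suc j'))" using j' by simp
    show ?thesis using Suc j' unfolding Rcols_def by (simp add: a a' b nth_Cons' del: upt_Suc)
  qed
qed

lemma sum_XX_Suc:
  fixes f :: "nat list \<Rightarrow> 'a::comm_ring_1"
  shows "(\<Sum>l\<in>XX d (Suc p). f l) = (\<Sum>l\<in>XX d p. f (l @ [0])) +
     (if 1 \<le> p + d then (\<Sum>l\<in>XX d p. f ((p + d) # map Suc l)) else 0)"
proof -
  have i1: "inj_on (\<lambda>l. l @ [0]) (XX d p)" by (auto intro: inj_onI)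
  have i2: "inj_on (\<lambda>l. (p + d) # map Suc l) (XX d p)" by (auto intro!: inj_onI simp: inj_map_eq_map)
  show ?thesis
  proof (cases "1 \<le> p + d")
    case True
    have "(\<Sum>l\<in>XX d (Suc p). f l) = (\<Sum>l\<in>(\<lambda>l. l @ [0]) ` XX d p. f l) + (\<Sum>l\<in>(\<lambda>l. (p + d) # map Suc l) ` XX d p. f l)"
      unfolding XX_Suc using True XX_Suc_disj[OF True, of d p]
      by (simp add: sum.union_disjoint XX_finite)
    also have "\<dots> = (\<Sum>l\<in>XX d p. f (l @ [0])) + (\<Sum>l\<in>XX d p. f ((p + d) # map Suc l))"
      by (simp add: sum.reindex[OF i1] sum.reindex[OF i2])
    finally show ?thesis using True by simp
  next
    case False
    thus ?thesis unfolding XX_Suc by (simp add: sum.reindex[OF i1])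
  qed
qed

lemma block_identity:
  assumes d: "d \<le> 2"
  shows "length pre + p + length post = n \<Longrightarrow>
    DL n (pre @ Rcols d e p @ post) = (\<Sum>l\<in>XX d p. eps d l * DL n (pre @ bcols e p l @ post))"
proof (induction p arbitrary: e pre)
  case 0
  thus ?case by (simp add: XX_0 Rcols_def bcols_def eps_def wgt_def psize_def frob_rank_def)
next
  case (Suc p)
  let ?e = "\<lambda>k. e (Suc k)"
  let ?c = "coef d (Suc p) 0 :: 'a"
  let ?T = "e (2 * p + d)"
  have "DL n (pre @ Rcols d e (Suc p) @ post) =
      DL n (pre @ [(\<lambda>i. e 0 i + ?c * ?T i)] @ (Rcols d ?e p @ post))"
    by (simp add: Rcols_Suc)
  also have "\<dots> = DL n (pre @ [e 0] @ (Rcols d ?e p @ post)) + ?c * DL n (pre @ [?T] @ (Rcols d ?e p @ post))"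
    by (rule DL_lin, insert Suc.prems, simp add: Rcols_def)
  also have "DL n (pre @ [e 0] @ (Rcols d ?e p @ post)) = DL n ((pre @ [e 0]) @ Rcols d ?e p @ post)" by simp
  also have "\<dots> = (\<Sum>l\<in>XX d p. eps d l * DL n ((pre @ [e 0]) @ bcols ?e p l @ post))"
    by (rule Suc.IH, insert Suc.prems, simp)
  also have "\<dots> = (\<Sum>l\<in>XX d p. eps d (l @ [0]) * DL n (pre @ bcols e (Suc p) (l @ [0]) @ post))"
  proof (rule sum.cong[OF refl])
    fix l assume l: "l \<in> XX d p"
    hence len: "length l = p" unfolding XX_def parts_def by auto
    show "eps d l * DL n ((pre @ [e 0]) @ bcols ?e p l @ post) = eps d (l @ [0]) * DL n (pre @ bcols e (Suc p) (l @ [0]) @ post)"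
      by (simp add: bcols_app0[OF len] eps_def wgt_app0)
  qed
  also have "DL n (pre @ [?T] @ (Rcols d ?e p @ post)) = DL n ((pre @ [?T]) @ Rcols d ?e p @ post)" by simp
  also have "\<dots> = (\<Sum>l\<in>XX d p. eps d l * DL n ((pre @ [?T]) @ bcols ?e p l @ post))"
    by (rule Suc.IH, insert Suc.prems, simp)
  finally have E: "DL n (pre @ Rcols d e (Suc p) @ post) =
     (\<Sum>l\<in>XX d p. eps d (l @ [0]) * DL n (pre @ bcols e (Suc p) (l @ [0]) @ post)) +
     ?c * (\<Sum>l\<in>XX d p. eps d l * DL n ((pre @ [?T]) @ bcols ?e p l @ post))" .
  show ?case
  proof (cases "1 \<le> p + d")
    case False
    hence "?c = 0" unfolding coef_def by simp
    thus ?thesis unfolding E sum_XX_Suc using False by simp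
  next
    case True
    have c: "?c = cc d" unfolding coef_def using True by auto
    have "?c * (\<Sum>l\<in>XX d p. eps d l * DL n ((pre @ [?T]) @ bcols ?e p l @ post))
        = (\<Sum>l\<in>XX d p. eps d ((p + d) # map Suc l) * DL n (pre @ bcols e (Suc p) ((p + d) # map Suc l) @ post))"
      unfolding sum_distrib_left
    proof (rule sum.cong[OF refl])
      fix l assume l: "l \<in> XX d p"
      hence len: "length l = p" unfolding XX_def parts_def by auto
      have hp: "p + d + p = 2 * p + d" by simp
      have eqc: "bcols e (Suc p) ((p + d) # map Suc l) @ post = bcols ?e p l @ [?T] @ post"
        using bcols_cons[OF len, of e "p + d"] unfolding hp by simp
      have D: "DL n ((pre @ [?T]) @ bcols ?e p l @ post) = (-1) ^ p * DL n (pre @ bcols e (Suc p) ((p + d) # map Suc l) @ post)"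
        unfolding eqc using DL_move[of pre "bcols ?e p l" post n ?T] Suc.prems len by (simp add: bcols_def)
      have W: "wgt d ((p + d) # map Suc l) div 2 = wgt d l div 2 + (p + (if 1 \<le> d then 1 else 0))"
        using wgt_cons[OF l d True] by simp
      show "?c * (eps d l * DL n ((pre @ [?T]) @ bcols ?e p l @ post)) =
          eps d ((p + d) # map Suc l) * DL n (pre @ bcols e (Suc p) ((p + d) # map Suc l) @ post)"
        unfolding D c eps_def W by (simp add: cc_def power_add)
    qed
    thus ?thesis unfolding E sum_XX_Suc using True by simp
  qed
qed


lemma DL_cong:
  assumes "length cs = length cs'" "\<And>j i. j < n \<Longrightarrow> i < n \<Longrightarrow> (cs ! j) i = (cs' ! j) i"
  shows "DL n cs = DL n cs'"
  unfolding DL_def by (rule arg_cong[of _ _ det], rule eq_matI, insert assms, auto)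

lemma DL_zero:
  assumes "length pre + Suc (length post) = n"
  shows "DL n (pre @ [(\<lambda>i. 0)] @ post) = (0::'a::comm_ring_1)"
proof -
  have "DL n (pre @ [(\<lambda>i. (0::'a) + 1 * 0)] @ post) = DL n (pre @ [(\<lambda>i. 0)] @ post) + 1 * DL n (pre @ [(\<lambda>i. 0)] @ post)"
    by (rule DL_lin[OF assms])
  thus ?thesis by simp
qed

lemma DL_sum:
  assumes S: "finite S" and len: "length pre + Suc (length post) = n"
  shows "DL n (pre @ [(\<lambda>i. \<Sum>s\<in>S. c s * f s i)] @ post) = (\<Sum>s\<in>S. c s * DL n (pre @ [f s] @ post))"
  using S
proof (induction S rule: finite_induct)
  case empty thus ?case using DL_zero[OF len] by simp
next
  case (insert x S)
  have "DL n (pre @ [(\<lambda>i. \<Sum>s\<in>insert x S. c s * f s i)] @ post)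
      = DL n (pre @ [(\<lambda>i. (\<Sum>s\<in>S. c s * f s i) + c x * f x i)] @ post)"
    using insert by (simp add: add.commute)
  also have "\<dots> = DL n (pre @ [(\<lambda>i. \<Sum>s\<in>S. c s * f s i)] @ post) + c x * DL n (pre @ [f x] @ post)"
    by (rule DL_lin[OF len])
  finally show ?case using insert by (simp add: add.commute)
qed

lemma DL_dup:
  assumes len: "length pre + Suc (length post) = n" and l: "l < length pre" and v: "pre ! l = v"
  shows "DL n (pre @ [v] @ post) = 0"
proof -
  let ?A = "mat n n (\<lambda>(i,j). ((pre @ [v] @ post) ! j) i)"
  have "det ?A = 0"
  proof (rule det_identical_columns[of ?A n l "length pre"])
    show "col ?A l = col ?A (length pre)"
      using len l v by (auto intro!: eq_vecI simp: nth_append)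
  qed (insert len l, auto)
  thus ?thesis unfolding DL_def .
qed

lemma DL_tri:
  assumes "length pre + m + length post = n"
    and "\<And>j i. j < m \<Longrightarrow> i < n \<Longrightarrow> A j i = B j i + (\<Sum>l<j. t j l * B l i)"
  shows "DL n (pre @ map A [0..<m] @ post) = DL n (pre @ map B [0..<m] @ post)"
  using assms
proof (induction m arbitrary: post)
  case 0 thus ?case by simp
next
  case (Suc m)
  have len: "length (pre @ map B [0..<m]) + Suc (length post) = n" using Suc.prems by simp
  have "DL n (pre @ map A [0..<Suc m] @ post) = DL n (pre @ map A [0..<m] @ ([A m] @ post))" by simp
  also have "\<dots> = DL n (pre @ map B [0..<m] @ ([A m] @ post))"
    by (rule Suc.IH, insert Suc.prems, auto)
  also have "\<dots> = DL n ((pre @ map B [0..<m]) @ [(\<lambda>i. B m i + 1 * (\<Sum>l<m. t m l * B l i))] @ post)"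
    by (rule DL_cong, simp, insert Suc.prems, auto simp: nth_append nth_Cons')
  also have "\<dots> = DL n ((pre @ map B [0..<m]) @ [B m] @ post) + 1 * DL n ((pre @ map B [0..<m]) @ [(\<lambda>i. \<Sum>l<m. t m l * B l i)] @ post)"
    by (rule DL_lin[OF len])
  also have "DL n ((pre @ map B [0..<m]) @ [(\<lambda>i. \<Sum>l<m. t m l * B l i)] @ post) = (\<Sum>l<m. t m l * DL n ((pre @ map B [0..<m]) @ [B l] @ post))"
    by (rule DL_sum[OF _ len], simp)
  also have "\<dots> = 0"
  proof (rule sum.neutral, rule ballI)
    fix l assume "l \<in> {..<m}"
    hence l: "l < m" by simp
    have "DL n ((pre @ map B [0..<m]) @ [B l] @ post) = 0"
      by (rule DL_dup[OF len, of "length pre + l"], insert l, auto simp: nth_append)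
    thus "t m l * DL n ((pre @ map B [0..<m]) @ [B l] @ post) = 0" by simp
  qed
  finally show ?case by simp
qed

definition spn :: "nat \<Rightarrow> (nat \<Rightarrow> nat \<Rightarrow> 'a::comm_ring_1) \<Rightarrow> nat \<Rightarrow> (nat \<Rightarrow> 'a) \<Rightarrow> bool" where
  "spn n B j v \<longleftrightarrow> (\<exists>t. \<forall>i<n. v i = (\<Sum>l<j. t l * B l i))"

lemma spn_add: "spn n B j u \<Longrightarrow> spn n B j v \<Longrightarrow> spn n B j (\<lambda>i. u i + v i)"
  unfolding spn_def
proof (elim exE)
  fix t1 t2 assume 1: "\<forall>i<n. u i = (\<Sum>l<j. t1 l * B l i)" and 2: "\<forall>i<n. v i = (\<Sum>l<j. t2 l * B l i)"
  show "\<exists>t. \<forall>i<n. u i + v i = (\<Sum>l<j. t l * B l i)"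
    by (rule exI[of _ "\<lambda>l. t1 l + t2 l"], insert 1 2, simp add: sum.distrib distrib_right)
qed

lemma spn_scale: "spn n B j v \<Longrightarrow> spn n B j (\<lambda>i. c * v i)"
  unfolding spn_def
proof (elim exE)
  fix t assume 1: "\<forall>i<n. v i = (\<Sum>l<j. t l * B l i)"
  show "\<exists>t. \<forall>i<n. c * v i = (\<Sum>l<j. t l * B l i)"
    by (rule exI[of _ "\<lambda>l. c * t l"], insert 1, simp add: sum_distrib_left mult.assoc)
qed

lemma spn_mono: "spn n B j v \<Longrightarrow> j \<le> j' \<Longrightarrow> spn n B j' v"
  unfolding spn_def
proof (elim exE)
  fix t assume 1: "\<forall>i<n. v i = (\<Sum>l<j. t l * B l i)" and jj: "j \<le> j'"
  show "\<exists>t. \<forall>i<n. v i = (\<Sum>l<j'. t l * B l i)"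
  proof (rule exI[of _ "\<lambda>l. if l < j then t l else 0"], intro allI impI)
    fix i assume i: "i < n"
    have "(\<Sum>l<j'. (if l < j then t l else 0) * B l i) = (\<Sum>l<j. (if l < j then t l else 0) * B l i)"
      by (rule sum.mono_neutral_right, insert jj, auto)
    thus "v i = (\<Sum>l<j'. (if l < j then t l else 0) * B l i)" using 1 i by simp
  qed
qed

lemma spn_zero: "spn n B j (\<lambda>i. 0)"
  unfolding spn_def by (rule exI[of _ "\<lambda>l. 0"], simp)

lemma spn_B: "l < j \<Longrightarrow> spn n B j (B l)"
  unfolding spn_def
proof (rule exI[of _ "\<lambda>l'. if l' = l then 1 else 0"], intro allI impI)
  fix i assume "l < j" "i < n"
  have "(\<Sum>l'<j. (if l' = l then 1 else 0) * B l' i) = (\<Sum>l'<j. if l' = l then B l' i else 0)"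
    by (rule sum.cong) auto
  thus "B l i = (\<Sum>l'<j. (if l' = l then 1 else 0) * B l' i)"
    using \<open>l < j\<close> by (simp add: sum.delta)
qed

lemma spn_sum: "finite S \<Longrightarrow> (\<And>s. s \<in> S \<Longrightarrow> spn n B j (f s)) \<Longrightarrow> spn n B j (\<lambda>i. \<Sum>s\<in>S. f s i)"
proof (induction S rule: finite_induct)
  case empty thus ?case using spn_zero by simp
next
  case (insert x S)
  have "spn n B j (\<lambda>i. f x i + (\<Sum>s\<in>S. f s i))"
    by (rule spn_add, insert insert, auto)
  thus ?case using insert by simp
qed

lemma spn_ext: "spn n B j v \<Longrightarrow> (\<And>i. i < n \<Longrightarrow> v i = w i) \<Longrightarrow> spn n B j w"
  unfolding spn_def by auto

lemma tri_exists:
  fixes B :: "nat \<Rightarrow> nat \<Rightarrow> 'a::comm_ring_1"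
  assumes rec: "\<And>k. \<exists>s. \<forall>i<n. y i * B k i = B (Suc k) i + (\<Sum>l<Suc k. s l * B l i)"
    and b0: "\<And>i. i < n \<Longrightarrow> base i = B 0 i"
  shows "\<exists>t. \<forall>i<n. y i ^ j * base i = B j i + (\<Sum>l<j. t l * B l i)"
proof -
  have recs: "spn n B (Suc k) (\<lambda>i. y i * B k i - B (Suc k) i)" for k
  proof -
    obtain s where s: "\<forall>i<n. y i * B k i = B (Suc k) i + (\<Sum>l<Suc k. s l * B l i)" using rec by blast
    show ?thesis unfolding spn_def by (rule exI[of _ s], insert s, simp)
  qed
  have yB: "spn n B (Suc (Suc k)) (\<lambda>i. y i * B k i)" for k
  proof -
    have "spn n B (Suc (Suc k)) (\<lambda>i. B (Suc k) i + (y i * B k i - B (Suc k) i))"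
      by (rule spn_add[OF spn_B spn_mono[OF recs]], auto)
    thus ?thesis by simp
  qed
  have ysp: "spn n B (Suc j) (\<lambda>i. y i * v i)" if v: "spn n B j v" for j v
  proof -
    from v obtain t where t: "\<forall>i<n. v i = (\<Sum>l<j. t l * B l i)" unfolding spn_def by blast
    have "spn n B (Suc j) (\<lambda>i. \<Sum>l<j. t l * (y i * B l i))"
      by (rule spn_sum, simp, rule spn_scale, rule spn_mono[OF yB], auto)
    thus ?thesis by (rule spn_ext, insert t, simp add: sum_distrib_left ac_simps)
  qed
  have "spn n B j (\<lambda>i. y i ^ j * base i - B j i)"
  proof (induction j)
    case 0 thus ?case by (rule spn_ext[OF spn_zero], simp add: b0)
  next
    case (Suc j)
    have "spn n B (Suc j) (\<lambda>i. y i * (y i ^ j * base i - B j i) + (y i * B j i - B (Suc j) i))"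
      by (rule spn_add[OF ysp[OF Suc] recs])
    thus ?case by (rule spn_ext, simp add: algebra_simps)
  qed
  then obtain t where "\<forall>i<n. y i ^ j * base i - B j i = (\<Sum>l<j. t l * B l i)" unfolding spn_def by blast
  thus ?thesis by (intro exI[of _ t]) (simp add: algebra_simps)
qed

lemma tri_DL:
  fixes B :: "nat \<Rightarrow> nat \<Rightarrow> 'a::comm_ring_1"
  assumes rec: "\<And>k. \<exists>s. \<forall>i<n. y i * B k i = B (Suc k) i + (\<Sum>l<Suc k. s l * B l i)"
    and b0: "\<And>i. i < n \<Longrightarrow> base i = B 0 i"
    and len: "length pre + m + length post = n"
  shows "DL n (pre @ map (\<lambda>j i. y i ^ j * base i) [0..<m] @ post) = DL n (pre @ map B [0..<m] @ post)"
proof -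
  have "\<forall>j. \<exists>t. \<forall>i<n. y i ^ j * base i = B j i + (\<Sum>l<j. t l * B l i)"
    using tri_exists[OF rec b0] by blast
  then obtain tt where tt: "\<And>j. \<forall>i<n. y i ^ j * base i = B j i + (\<Sum>l<j. tt j l * B l i)"
    by metis
  show ?thesis by (rule DL_tri[OF len], insert tt, auto)
qed


definition cf :: "nat \<Rightarrow> nat \<Rightarrow> 'a::field" where
  "cf d k = (if d = 0 then (if k = 0 then 0 else 1) else -1)"

definition Bs :: "nat \<Rightarrow> int \<Rightarrow> 'a::field \<Rightarrow> nat \<Rightarrow> 'a" where
  "Bs d N x k = x powi (N - int k) + cf d k * x powi (N + int k + int d)"

definition zc :: "nat \<Rightarrow> nat \<Rightarrow> 'a::field" where
  "zc d k = (if d = 1 \<and> k = 0 then -1 else if d = 0 \<and> k = 1 then 1 else 0)"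

lemma xP: "x \<noteq> 0 \<Longrightarrow> x * x powi e = x powi (e + 1)"
  for x :: "'a::field" by (simp add: power_int_add_1')
lemma iP: "x \<noteq> 0 \<Longrightarrow> inverse x * x powi e = x powi (e - 1)"
  for x :: "'a::field" by (simp add: power_int_diff field_simps)

lemma Bs_rec:
  fixes x :: "'a::field"
  assumes x: "x \<noteq> 0" and d: "d \<le> 2"
  shows "(x + inverse x) * Bs d N x k = Bs d N x (Suc k) + (if 1 \<le> k then Bs d N x (k - 1) else 0) + zc d k * Bs d N x 0"
proof -
  have D: "d = 0 \<or> d = 1 \<or> d = 2" using d by auto
  have e: "(x + inverse x) * (x powi a + c * x powi b) = x powi (a + 1) + x powi (a - 1) + c * x powi (b + 1) + c * x powi (b - 1)" for a b c
    using x by (simp add: distrib_left distrib_right xP iP mult.left_commute)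
  consider "k = 0" | "k = 1" | k' where "k = Suc (Suc k')" by (metis One_nat_def not0_implies_Suc)
  thus ?thesis
  proof cases
    case 1 thus ?thesis using D unfolding Bs_def e by (auto simp: cf_def zc_def algebra_simps)
  next
    case 2 thus ?thesis using D unfolding Bs_def e by (auto simp: cf_def zc_def algebra_simps)
  next
    case 3 thus ?thesis using D unfolding Bs_def e by (auto simp: cf_def zc_def algebra_simps)
  qed
qed


lemma DL_cong2:
  assumes "length A1 = length B1" "length A2 = length B2" "length A1 + length A2 = n"
    and "\<And>j i. j < length A1 \<Longrightarrow> i < n \<Longrightarrow> (A1 ! j) i = (B1 ! j) i"
    and "\<And>j i. j < length A2 \<Longrightarrow> i < n \<Longrightarrow> (A2 ! j) i = (B2 ! j) i"
  shows "DL n (A1 @ A2) = DL n (B1 @ B2)"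
  by (rule DL_cong, insert assms, auto simp: nth_append)

lemma det_row_scale:
  assumes A: "A \<in> carrier_mat n n"
  shows "det (mat n n (\<lambda>(i,j). c i * A $$ (i,j))) = (\<Prod>i<n. c i) * det A"
proof -
  have car: "mat n n (\<lambda>(i,j). c i * A $$ (i,j)) \<in> carrier_mat n n" by simp
  have e: "{0..<n} = {..<n}" by auto
  have "det (mat n n (\<lambda>(i,j). c i * A $$ (i,j))) =
     (\<Sum>p\<in>{p. p permutes {0..<n}}. signof p * (\<Prod>i = 0..<n. c i * A $$ (i, p i)))"
    unfolding det_def'[OF car]
  proof (rule sum.cong[OF refl])
    fix p assume "p \<in> {p. p permutes {0..<n}}"
    hence "\<And>i. i < n \<Longrightarrow> p i < n" using permutes_in_image by fastforce
    thus "signof p * (\<Prod>i = 0..<n. mat n n (\<lambda>(i,j). c i * A $$ (i,j)) $$ (i, p i)) =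
      signof p * (\<Prod>i = 0..<n. c i * A $$ (i, p i))" by (auto intro!: prod.cong)
  qed
  also have "\<dots> = (\<Prod>i<n. c i) * det A"
    unfolding det_def'[OF A] sum_distrib_left prod.distrib e by (simp add: ac_simps)
  finally show ?thesis .
qed

definition rfun :: "nat \<Rightarrow> 'a::field \<Rightarrow> 'a" where
  "rfun d x = (if d = 2 then 1 - x ^ 2 else if d = 1 then 1 - x else 1)"

lemma rfun_base:
  fixes x :: "'a::field"
  assumes x: "x \<noteq> 0" and d: "d \<le> 2"
  shows "rfun d x * x powi N = Bs d N x 0"
proof -
  have D: "d = 0 \<or> d = 1 \<or> d = 2" using d by auto
  have a: "x powi (N + 1) = x powi N * x" using power_int_add_1[of x N] x by simp
  have b: "x powi (N + 2) = x powi N * x ^ 2" using power_int_add[of x N 2] x by simp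
  have a': "x powi (1 + N) = x * x powi N" using a by (simp add: ac_simps)
  have b': "x powi (2 + N) = x ^ 2 * x powi N" using b by (simp add: ac_simps)
  have "d = 0 \<Longrightarrow> ?thesis" unfolding Bs_def rfun_def cf_def by simp
  moreover have "d = 1 \<Longrightarrow> ?thesis" unfolding Bs_def rfun_def cf_def by (simp add: a a' algebra_simps)
  moreover have "d = 2 \<Longrightarrow> ?thesis" unfolding Bs_def rfun_def cf_def by (simp add: b b' algebra_simps)
  ultimately show ?thesis using D by blast
qed

definition Bblk :: "nat \<Rightarrow> (nat \<Rightarrow> 'a::field) \<Rightarrow> (nat \<Rightarrow> 'a) \<Rightarrow> nat \<Rightarrow> nat \<Rightarrow> nat \<Rightarrow> 'a" where
  "Bblk d x g m k i = g i * Bs d (int m - 1) (x i) k"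

lemma Bblk_rec:
  fixes x :: "nat \<Rightarrow> 'a::field"
  assumes x: "\<And>i. i < n \<Longrightarrow> x i \<noteq> 0" and d: "d \<le> 2"
  shows "\<exists>s. \<forall>i<n. (x i + inverse (x i)) * Bblk d x g m k i = Bblk d x g m (Suc k) i + (\<Sum>l<Suc k. s l * Bblk d x g m l i)"
proof (rule exI[of _ "\<lambda>l. (if Suc l = k then 1 else 0) + (if l = 0 then zc d k else 0)"], intro allI impI)
  fix i assume i: "i < n"
  let ?B = "Bblk d x g m"
  have s1: "(\<Sum>l<Suc k. (if Suc l = k then 1 else 0) * ?B l i) = (if 1 \<le> k then ?B (k - 1) i else 0)"
  proof -
    have "(\<Sum>l<Suc k. (if Suc l = k then 1 else 0) * ?B l i) = (\<Sum>l<Suc k. if l = k - 1 \<and> 1 \<le> k then ?B l i else 0)"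
      by (rule sum.cong) auto
    also have "\<dots> = (if 1 \<le> k then ?B (k - 1) i else 0)"
      by (cases "1 \<le> k") (simp_all add: sum.delta)
    finally show ?thesis .
  qed
  have s2: "(\<Sum>l<Suc k. (if l = 0 then zc d k else 0) * ?B l i) = zc d k * ?B 0 i"
  proof -
    have "(\<Sum>l<Suc k. (if l = 0 then zc d k else 0) * ?B l i) = (\<Sum>l<Suc k. if l = 0 then zc d k * ?B l i else 0)"
      by (rule sum.cong) auto
    thus ?thesis by (simp add: sum.delta)
  qed
  have "(x i + inverse (x i)) * ?B k i = ?B (Suc k) i + (if 1 \<le> k then ?B (k - 1) i else 0) + zc d k * ?B 0 i"
    unfolding Bblk_def using Bs_rec[OF x[OF i] d, of "int m - 1" k] by (simp add: algebra_simps)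
  thus "(x i + inverse (x i)) * ?B k i = ?B (Suc k) i +
      (\<Sum>l<Suc k. ((if Suc l = k then 1 else 0) + (if l = 0 then zc d k else 0)) * ?B l i)"
    unfolding distrib_right sum.distrib s1 s2 by simp
qed

lemma Bblk_rev:
  fixes x :: "nat \<Rightarrow> 'a::field"
  assumes j: "j < m"
  shows "Bblk d x g m j i = (rev (Rcols d (\<lambda>k i. g i * x i ^ k) m) ! j) i"
proof -
  let ?e = "\<lambda>k i. g i * x i ^ k"
  have l: "m - 1 - j < length [0..<m]" using j by simp
  have r: "rev (Rcols d ?e m) ! j = Rcols d ?e m ! (m - 1 - j)"
    using j by (simp add: rev_nth Rcols_def)
  also have "\<dots> = (\<lambda>i. ?e (m - 1 - j) i + coef d m (m - 1 - j) * ?e (2 * m - 2 + d - (m - 1 - j)) i)"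
    unfolding Rcols_def nth_map[OF l] using j by simp
  finally have R: "(rev (Rcols d ?e m) ! j) i = g i * x i ^ (m - 1 - j) + coef d m (m - 1 - j) * (g i * x i ^ (2 * m - 2 + d - (m - 1 - j)))"
    by simp
  have e1: "int m - 1 - int j = int (m - 1 - j)" using j by simp
  have e2: "int m - 1 + int j + int d = int (m - 1 + j + d)" using j by simp
  have e3: "2 * m - 2 + d - (m - 1 - j) = m - 1 + j + d" using j by simp
  have c: "coef d m (m - 1 - j) = (cf d j :: 'a)"
    unfolding coef_def cf_def cc_def using j by auto
  show ?thesis unfolding R Bblk_def Bs_def e1 e2 e3 c power_int_of_nat
    by (simp add: algebra_simps)
qed

lemma powi_y:
  fixes x :: "'a::field"
  assumes x: "x \<noteq> 0" and j: "j < m"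
  shows "x powi (int m - 1) * (x + inverse x) ^ j = x ^ (m - 1 - j) * (1 + x ^ 2) ^ j"
proof -
  have "x powi (int m - 1) = x ^ (m - 1)" using j by (simp add: power_int_def nat_diff_distrib)
  also have "\<dots> = x ^ (m - 1 - j) * x ^ j" using j by (simp add: power_add[symmetric])
  finally have "x powi (int m - 1) * (x + inverse x) ^ j = x ^ (m - 1 - j) * (x * (x + inverse x)) ^ j"
    by (simp add: power_mult_distrib)
  also have "x * (x + inverse x) = 1 + x ^ 2" using x by (simp add: field_simps power2_eq_square)
  finally show ?thesis .
qed


lemma length_bcols[simp]: "length (bcols e p l) = p" unfolding bcols_def by simp
lemma length_Rcols[simp]: "length (Rcols d e p) = p" unfolding Rcols_def by simp

lemma DL_Vmat:
  fixes x a :: "nat \<Rightarrow> 'a::field"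
  shows "DL (p + q) (bcols (\<lambda>k i. x i ^ k) p lam @ bcols (\<lambda>k i. a i * x i ^ k) q mu) = det (Vmat p q lam mu x a)"
  unfolding DL_def Vmat_def
  by (rule arg_cong[of _ _ det], rule eq_matI, auto simp: nth_append bcols_def)

lemma main_d:
  fixes x a :: "nat \<Rightarrow> 'a::field"
  assumes x: "\<forall>i < p + q. x i \<noteq> 0" and d: "d \<le> 2"
  shows "(\<Prod>i<p + q. rfun d (x i) * x i powi (int p - 1)) *
      det (Vmat p q [] [] (\<lambda>i. x i + inverse (x i)) (\<lambda>i. a i * x i powi (int q - int p)))
     = (-1) ^ ((p choose 2) + (q choose 2)) *
       (\<Sum>(lam, mu)\<in>XX d p \<times> XX d q. eps d lam * eps d mu * det (Vmat p q lam mu x a))"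
proof -
  define n where "n = p + q"
  define y where "y = (\<lambda>i. x i + inverse (x i))"
  define b where "b = (\<lambda>i. a i * x i powi (int q - int p))"
  define Y where "Y = Vmat p q [] [] y b"
  define c where "c = (\<lambda>i. rfun d (x i) * x i powi (int p - 1))"
  define base1 where "base1 = (\<lambda>i. (1::'a) * (rfun d (x i) * x i powi (int p - 1)))"
  define base2 where "base2 = (\<lambda>i. a i * (rfun d (x i) * x i powi (int q - 1)))"
  define e1 where "e1 = (\<lambda>k i. (1::'a) * x i ^ k)"
  define e2 where "e2 = (\<lambda>k i. a i * x i ^ k)"
  have xn: "\<And>i. i < n \<Longrightarrow> x i \<noteq> 0" using x unfolding n_def by auto
  have recg: "\<And>g m k. \<exists>s. \<forall>i<n. y i * Bblk d x g m k i = Bblk d x g m (Suc k) i + (\<Sum>l<Suc k. s l * Bblk d x g m l i)"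
    unfolding y_def by (rule Bblk_rec[OF xn d])
  have b01: "\<And>i. i < n \<Longrightarrow> base1 i = Bblk d x (\<lambda>_. 1) p 0 i"
    using xn by (simp add: Bblk_def base1_def rfun_base d)
  have b02: "\<And>i. i < n \<Longrightarrow> base2 i = Bblk d x a q 0 i"
    using xn by (simp add: Bblk_def base2_def rfun_base d)
  have len1: "length ([]::(nat \<Rightarrow> 'a) list) + p + length (map (\<lambda>j i. y i ^ j * base2 i) [0..<q]) = n"
    by (simp add: n_def)
  have len2: "length (map (Bblk d x (\<lambda>_. 1) p) [0..<p]) + q + length ([]::(nat \<Rightarrow> 'a) list) = n"
    by (simp add: n_def)
  have Yc: "Y \<in> carrier_mat n n" unfolding Y_def Vmat_def n_def by simp
  have "(\<Prod>i<n. c i) * det Y = det (mat n n (\<lambda>(i,j). c i * Y $$ (i,j)))"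
    by (rule det_row_scale[OF Yc, symmetric])
  also have "\<dots> = DL n (map (\<lambda>j i. y i ^ j * base1 i) [0..<p] @ map (\<lambda>j i. y i ^ j * base2 i) [0..<q])"
    unfolding DL_def
  proof (rule arg_cong[of _ _ det], rule eq_matI)
    fix i j assume i: "i < dim_row (mat n n (\<lambda>(i,j). ((map (\<lambda>j i. y i ^ j * base1 i) [0..<p] @ map (\<lambda>j i. y i ^ j * base2 i) [0..<q]) ! j) i))"
      and j: "j < dim_col (mat n n (\<lambda>(i,j). ((map (\<lambda>j i. y i ^ j * base1 i) [0..<p] @ map (\<lambda>j i. y i ^ j * base2 i) [0..<q]) ! j) i))"
    have i: "i < n" and j: "j < n" using i j by auto
    have xi: "x i \<noteq> 0" using xn[OF i] .
    have pw: "x i powi (int p - 1) * x i powi (int q - int p) = x i powi (int q - 1)"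
      using power_int_add[of "x i" "int p - 1" "int q - int p"] xi by simp
    show "mat n n (\<lambda>(i,j). c i * Y $$ (i,j)) $$ (i, j) =
      mat n n (\<lambda>(i,j). ((map (\<lambda>j i. y i ^ j * base1 i) [0..<p] @ map (\<lambda>j i. y i ^ j * base2 i) [0..<q]) ! j) i) $$ (i, j)"
    proof (cases "j < p")
      case True thus ?thesis using i j unfolding Y_def Vmat_def c_def base1_def n_def
        by (simp add: nth_append pt_def)
    next
      case False
      have "c i * (b i * y i ^ (j - p)) = y i ^ (j - p) * base2 i"
        unfolding c_def b_def base2_def using pw by (simp add: algebra_simps)
      thus ?thesis using False i j unfolding Y_def Vmat_def n_def
        by (simp add: nth_append pt_def)
    qed
  qed auto
  also have "\<dots> = DL n ([] @ map (\<lambda>j i. y i ^ j * base1 i) [0..<p] @ map (\<lambda>j i. y i ^ j * base2 i) [0..<q])" by simp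
  also have "\<dots> = DL n ([] @ map (Bblk d x (\<lambda>_. 1) p) [0..<p] @ map (\<lambda>j i. y i ^ j * base2 i) [0..<q])"
    by (rule tri_DL[OF recg b01 len1])
  also have "\<dots> = DL n (map (Bblk d x (\<lambda>_. 1) p) [0..<p] @ map (\<lambda>j i. y i ^ j * base2 i) [0..<q] @ [])" by simp
  also have "\<dots> = DL n (map (Bblk d x (\<lambda>_. 1) p) [0..<p] @ map (Bblk d x a q) [0..<q] @ [])"
    by (rule tri_DL[OF recg b02 len2])
  also have "\<dots> = DL n (rev (Rcols d e1 p) @ rev (Rcols d e2 q))"
    by (rule DL_cong2, simp_all add: n_def, unfold e1_def e2_def, simp_all add: Bblk_rev)
  also have "\<dots> = DL n ([] @ rev (Rcols d e1 p) @ rev (Rcols d e2 q))" by simp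
  also have "\<dots> = (-1) ^ (p choose 2) * DL n ([] @ Rcols d e1 p @ rev (Rcols d e2 q))"
    by (subst DL_rev, simp_all add: n_def)
  also have "DL n ([] @ Rcols d e1 p @ rev (Rcols d e2 q)) = DL n (Rcols d e1 p @ rev (Rcols d e2 q) @ [])" by simp
  also have "\<dots> = (-1) ^ (q choose 2) * DL n (Rcols d e1 p @ Rcols d e2 q @ [])"
    by (subst DL_rev, simp_all add: n_def)
  also have "DL n (Rcols d e1 p @ Rcols d e2 q @ []) = DL n ([] @ Rcols d e1 p @ Rcols d e2 q)" by simp
  also have "\<dots> = (\<Sum>lam\<in>XX d p. eps d lam * DL n ([] @ bcols e1 p lam @ Rcols d e2 q))"
    by (rule block_identity[OF d], simp add: n_def)
  also have "\<dots> = (\<Sum>lam\<in>XX d p. eps d lam * (\<Sum>mu\<in>XX d q. eps d mu * det (Vmat p q lam mu x a)))"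
  proof (rule sum.cong[OF refl])
    fix lam assume "lam \<in> XX d p"
    have "DL n ([] @ bcols e1 p lam @ Rcols d e2 q) = DL n (bcols e1 p lam @ Rcols d e2 q @ [])" by simp
    also have "\<dots> = (\<Sum>mu\<in>XX d q. eps d mu * DL n (bcols e1 p lam @ bcols e2 q mu @ []))"
      by (rule block_identity[OF d], simp add: n_def)
    also have "\<dots> = (\<Sum>mu\<in>XX d q. eps d mu * det (Vmat p q lam mu x a))"
      unfolding e1_def e2_def n_def by (simp add: DL_Vmat)
    finally show "eps d lam * DL n ([] @ bcols e1 p lam @ Rcols d e2 q) =
      eps d lam * (\<Sum>mu\<in>XX d q. eps d mu * det (Vmat p q lam mu x a))" by simp
  qed
  also have "\<dots> = (\<Sum>(lam, mu)\<in>XX d p \<times> XX d q. eps d lam * eps d mu * det (Vmat p q lam mu x a))"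
    unfolding sum.cartesian_product[symmetric] sum_distrib_left by (simp add: ac_simps)
  finally show ?thesis
    unfolding n_def c_def Y_def y_def b_def by (simp add: power_add ac_simps)
qed


lemma sign_split:
  assumes "even a" "even b"
  shows "((-1::'a::comm_ring_1) ^ ((a + b) div 2)) = (-1) ^ (a div 2) * (-1) ^ (b div 2)"
proof -
  have "(a + b) div 2 = a div 2 + b div 2" using assms by auto
  thus ?thesis by (simp add: power_add)
qed

definition SS :: "nat \<Rightarrow> nat \<Rightarrow> nat \<Rightarrow> (nat \<Rightarrow> 'a::field) \<Rightarrow> (nat \<Rightarrow> 'a) \<Rightarrow> 'a" where
  "SS d p q x a = (\<Sum>(lam, mu)\<in>XX d p \<times> XX d q. eps d lam * eps d mu * det (Vmat p q lam mu x a))"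

lemma Gpq_SS: "Gpq p q x a = SS 2 p q x a"
  unfolding Gpq_def SS_def QQ_XX
proof (rule sum.cong[OF refl], clarify)
  fix lam mu assume l: "lam \<in> XX 2 p" and m: "mu \<in> XX 2 q"
  have "even (psize lam)" "even (psize mu)" using wgt_even[OF l] wgt_even[OF m] unfolding wgt_def by auto
  thus "(-1) ^ ((psize lam + psize mu) div 2) * det (Vmat p q lam mu x a) =
        eps 2 lam * eps 2 mu * det (Vmat p q lam mu x a)"
    unfolding eps_def wgt_def by (simp add: sign_split power_add)
qed

lemma Fpq_SS: "Fpq p q x a = SS 0 p q x a"
  unfolding Fpq_def SS_def PP_XX
proof (rule sum.cong[OF refl], clarify)
  fix lam mu assume l: "lam \<in> XX 0 p" and m: "mu \<in> XX 0 q"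
  have "even (psize lam)" "even (psize mu)" using wgt_even[OF l] wgt_even[OF m] unfolding wgt_def by auto
  thus "(-1) ^ ((psize lam + psize mu) div 2) * det (Vmat p q lam mu x a) =
        eps 0 lam * eps 0 mu * det (Vmat p q lam mu x a)"
    unfolding eps_def wgt_def by (simp add: sign_split power_add)
qed

lemma Hpq_SS: "Hpq p q x a = SS 1 p q x a"
  unfolding Hpq_def SS_def RR_XX
proof (rule sum.cong[OF refl], clarify)
  fix lam mu assume l: "lam \<in> XX 1 p" and m: "mu \<in> XX 1 q"
  have "even (psize lam + frob_rank lam)" "even (psize mu + frob_rank mu)"
    using wgt_even[OF l] wgt_even[OF m] unfolding wgt_def by auto
  moreover have "psize lam + frob_rank lam + psize mu + frob_rank mu = (psize lam + frob_rank lam) + (psize mu + frob_rank mu)"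
    by simp
  ultimately show "(-1) ^ ((psize lam + frob_rank lam + psize mu + frob_rank mu) div 2) * det (Vmat p q lam mu x a) =
        eps 1 lam * eps 1 mu * det (Vmat p q lam mu x a)"
    unfolding eps_def wgt_def by (simp only: sign_split) simp
qed

lemma Umat_det:
  fixes x a :: "nat \<Rightarrow> 'a::field"
  assumes x: "\<forall>i < p + q. x i \<noteq> 0"
  shows "det (Umat p q x a) = (\<Prod>i<p + q. x i powi (int p - 1)) *
     det (Vmat p q [] [] (\<lambda>i. x i + inverse (x i)) (\<lambda>i. a i * x i powi (int q - int p)))"
proof -
  let ?Y = "Vmat p q [] [] (\<lambda>i. x i + inverse (x i)) (\<lambda>i. a i * x i powi (int q - int p))"
  have Yc: "?Y \<in> carrier_mat (p + q) (p + q)" unfolding Vmat_def by simp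
  have "Umat p q x a = mat (p + q) (p + q) (\<lambda>(i,j). x i powi (int p - 1) * ?Y $$ (i,j))"
  proof (rule eq_matI)
    fix i j assume i: "i < dim_row (mat (p + q) (p + q) (\<lambda>(i,j). x i powi (int p - 1) * ?Y $$ (i,j)))"
      and j: "j < dim_col (mat (p + q) (p + q) (\<lambda>(i,j). x i powi (int p - 1) * ?Y $$ (i,j)))"
    have i: "i < p + q" and j: "j < p + q" using i j by auto
    have xi: "x i \<noteq> 0" using x i by auto
    have pw: "x i powi (int p - 1) * x i powi (int q - int p) = x i powi (int q - 1)"
      using power_int_add[of "x i" "int p - 1" "int q - int p"] xi by simp
    show "Umat p q x a $$ (i, j) = mat (p + q) (p + q) (\<lambda>(i,j). x i powi (int p - 1) * ?Y $$ (i,j)) $$ (i, j)"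
    proof (cases "j < p")
      case True
      thus ?thesis using i j powi_y[OF xi True] unfolding Umat_def Vmat_def by (simp add: pt_def)
    next
      case False
      hence jq: "j - p < q" using j by simp
      have "x i powi (int p - 1) * (a i * x i powi (int q - int p) * (x i + inverse (x i)) ^ (j - p))
          = a i * (x i powi (int q - 1) * (x i + inverse (x i)) ^ (j - p))"
        using pw by (simp add: algebra_simps)
      also have "\<dots> = a i * (x i ^ (q - 1 - (j - p)) * (1 + x i ^ 2) ^ (j - p))"
        using powi_y[OF xi jq] by simp
      also have "\<dots> = a i * x i ^ (q - 1 - (j - p)) * (1 + x i ^ 2) ^ (j - p)" by (simp only: mult.assoc)
      finally have calc: "x i powi (int p - 1) * (a i * x i powi (int q - int p) * (x i + inverse (x i)) ^ (j - p))
          = a i * x i ^ (q - 1 - (j - p)) * (1 + x i ^ 2) ^ (j - p)" .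
      have E1: "Umat p q x a $$ (i, j) = a i * x i ^ (q - 1 - (j - p)) * (1 + x i ^ 2) ^ (j - p)"
        using i j False unfolding Umat_def by simp
      have E2: "mat (p + q) (p + q) (\<lambda>(i,j). x i powi (int p - 1) * ?Y $$ (i,j)) $$ (i, j)
          = x i powi (int p - 1) * (a i * x i powi (int q - int p) * (x i + inverse (x i)) ^ (j - p))"
        using i j False unfolding Vmat_def by (simp add: pt_def)
      show ?thesis by (simp only: E1 E2 calc)
    qed
  qed (auto simp: Umat_def)
  thus ?thesis using det_row_scale[OF Yc] by simp
qed

theorem mainTheorem7:
  fixes p q :: nat and x a :: "nat \<Rightarrow> 'a::field"
  assumes "\<forall>i < p + q. x i \<noteq> 0"
  shows
   "Gpq p q x a = (-1) ^ ((p choose 2) + (q choose 2))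
        * (\<Prod>i<p + q. x i powi (int p - 1) * (1 - x i ^ 2))
        * det (Vmat p q [] [] (\<lambda>i. x i + inverse (x i)) (\<lambda>i. a i * x i powi (int q - int p)))
    \<and> Gpq p q x a = (-1) ^ ((p choose 2) + (q choose 2))
        * (\<Prod>i<p + q. 1 - x i ^ 2) * det (Umat p q x a)
    \<and> Hpq p q x a = (-1) ^ ((p choose 2) + (q choose 2))
        * (\<Prod>i<p + q. x i powi (int p - 1) * (1 - x i))
        * det (Vmat p q [] [] (\<lambda>i. x i + inverse (x i)) (\<lambda>i. a i * x i powi (int q - int p)))
    \<and> Hpq p q x a = (-1) ^ ((p choose 2) + (q choose 2))
        * (\<Prod>i<p + q. 1 - x i) * det (Umat p q x a)
    \<and> Gpq p q x a = (\<Prod>i<p + q. 1 - x i ^ 2) * Fpq p q x a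
    \<and> Hpq p q x a = (\<Prod>i<p + q. 1 - x i) * Fpq p q x a"
proof -
  let ?s = "(-1::'a) ^ ((p choose 2) + (q choose 2))"
  let ?DY = "det (Vmat p q [] [] (\<lambda>i. x i + inverse (x i)) (\<lambda>i. a i * x i powi (int q - int p)))"
  let ?X = "\<Prod>i<p + q. x i powi (int p - 1)"
  have ss: "?s * ?s = 1" by (simp add: power_add[symmetric] flip: power_mult_distrib)
  have m: "SS d p q x a = ?s * ((\<Prod>i<p + q. rfun d (x i)) * ?X * ?DY)" if d: "d \<le> 2" for d
  proof -
    have "(\<Prod>i<p + q. rfun d (x i) * x i powi (int p - 1)) * ?DY = ?s * SS d p q x a"
      using main_d[OF assms d, of a] unfolding SS_def .
    hence "?s * ((\<Prod>i<p + q. rfun d (x i)) * ?X * ?DY) = (?s * ?s) * SS d p q x a"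
      by (simp add: prod.distrib ac_simps)
    thus ?thesis using ss by simp
  qed
  have G: "Gpq p q x a = ?s * ((\<Prod>i<p + q. 1 - x i ^ 2) * ?X * ?DY)"
    using m[of 2] unfolding Gpq_SS rfun_def by simp
  have H: "Hpq p q x a = ?s * ((\<Prod>i<p + q. 1 - x i) * ?X * ?DY)"
    using m[of 1] unfolding Hpq_SS rfun_def by simp
  have F: "Fpq p q x a = ?s * (?X * ?DY)"
    using m[of 0] unfolding Fpq_SS rfun_def by simp
  have U: "det (Umat p q x a) = ?X * ?DY" using Umat_det[OF assms] .
  have P1: "(\<Prod>i<p + q. x i powi (int p - 1) * (1 - x i ^ 2)) = ?X * (\<Prod>i<p + q. 1 - x i ^ 2)"
    by (simp add: prod.distrib)
  have P2: "(\<Prod>i<p + q. x i powi (int p - 1) * (1 - x i)) = ?X * (\<Prod>i<p + q. 1 - x i)"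
    by (simp add: prod.distrib)
  show ?thesis unfolding P1 P2 U using G H F by (simp add: ac_simps)
qed


end
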